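(* If $\mathcal A\subseteq\binom{[n]}{k}$ is $t$-intersecting, then for every $1\le i<j\le n$, ${\rm co}_2(\Delta_{ij}(\mathcal A))\ge{\rm co}_2(\mathcal A)$. In particular, there exists a left-compressed $t$-intersecting family $\mathcal B\subseteq\binom{[n]}{k}$ such that ${\rm co}_2(\mathcal B)\ge{\rm co}_2(\mathcal A)$.
   Context: A family is $t$-intersecting if any two members share at least $t$ elements. $d(E)=|\{F\in\mathcal F:E\subseteq F\}|$, ${\rm co}_2(\mathcal F)=\sum_{E\in\binom{[n]}{k-1}}d(E)^2$. Shift: for $A\in\mathcal A$, $\delta_{ij}(A)=(A\setminus\{j\})\cup\{i\}$ if $j\in A$, $i\notin A$ and $(A\setminus\{j\})\cup\{i\}\notin\mathcal A$; otherwise $\delta_{ij}(A)=A$; $\Delta_{ij}(\mathcal A)=\{\delta_{ij}(A):A\in\mathcal A\}$. A family $\mathcal B$ is left-compressed if $\Delta_{ij}(\mathcal B)=\mathcal B$ for all $1\le i<j\le n$. *)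

theory Defs
  imports Main
begin

definition ksets :: "nat \<Rightarrow> nat \<Rightarrow> nat set set" where
  "ksets n k = {K. K \<subseteq> {1..n} \<and> card K = k}"

definition t_intersecting :: "nat \<Rightarrow> nat set set \<Rightarrow> bool" where
  "t_intersecting t F \<longleftrightarrow> (\<forall>A\<in>F. \<forall>B\<in>F. card (A \<inter> B) \<ge> t)"

definition deg :: "nat set set \<Rightarrow> nat set \<Rightarrow> nat" where
  "deg F E = card {A\<in>F. E \<subseteq> A}"

definition co2 :: "nat \<Rightarrow> nat \<Rightarrow> nat set set \<Rightarrow> nat" where
  "co2 n k F = (\<Sum>E\<in>ksets n (k - 1). (deg F E)^2)"

definition delta :: "nat \<Rightarrow> nat \<Rightarrow> nat set set \<Rightarrow> nat set \<Rightarrow> nat set" where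
  "delta i j F A = (if j \<in> A \<and> i \<notin> A \<and> insert i (A - {j}) \<notin> F
                    then insert i (A - {j}) else A)"

definition shift :: "nat \<Rightarrow> nat \<Rightarrow> nat set set \<Rightarrow> nat set set" where
  "shift i j F = delta i j F ` F"

definition left_compressed :: "nat \<Rightarrow> nat set set \<Rightarrow> bool" where
  "left_compressed n F \<longleftrightarrow> (\<forall>i j. 1 \<le> i \<and> i < j \<and> j \<le> n \<longrightarrow> shift i j F = F)"

end

theory Submission imports Defs begin

lemma ksets_finite: "finite (ksets n k)"
proof -
  have "ksets n k \<subseteq> Pow {1..n}" unfolding ksets_def by auto
  thus ?thesis by (rule finite_subset) auto
qed

lemma ksets_fin_mem: "F \<in> ksets n k \<Longrightarrow> finite F"
  unfolding ksets_def by (auto intro: finite_subset)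

lemma swap_back: "j \<in> F \<Longrightarrow> i \<notin> F \<Longrightarrow> i \<noteq> j \<Longrightarrow> insert j (insert i (F - {j}) - {i}) = F"
  by auto

lemma delta_inj:
  assumes "i \<noteq> j" shows "inj_on (delta i j A) A"
proof (rule inj_onI)
  fix F1 F2 assume F: "F1 \<in> A" "F2 \<in> A" "delta i j A F1 = delta i j A F2"
  show "F1 = F2"
  proof (cases "j \<in> F1 \<and> i \<notin> F1 \<and> insert i (F1 - {j}) \<notin> A")
    case c1: True
    show ?thesis
    proof (cases "j \<in> F2 \<and> i \<notin> F2 \<and> insert i (F2 - {j}) \<notin> A")
      case True
      with c1 F have "insert i (F1 - {j}) = insert i (F2 - {j})" by (simp add: delta_def)
      hence "insert j (insert i (F1 - {j}) - {i}) = insert j (insert i (F2 - {j}) - {i})" by simp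
      moreover have "insert j (insert i (F - {j}) - {i}) = F" if "j \<in> F" "i \<notin> F" for F
        using that assms by auto
      ultimately show ?thesis using c1 True by metis
    next
      case False
      with c1 F show ?thesis by (simp add: delta_def)
    qed
  next
    case c1: False
    show ?thesis
    proof (cases "j \<in> F2 \<and> i \<notin> F2 \<and> insert i (F2 - {j}) \<notin> A")
      case True
      with c1 F show ?thesis by (simp add: delta_def split: if_splits)
    next
      case False
      have "delta i j A F1 = F1" "delta i j A F2 = F2"
        using c1 False unfolding delta_def by (simp_all only: if_False)
      with F show ?thesis by simp
    qed
  qed
qed

lemma deg_shift:
  assumes "i \<noteq> j" shows "deg (shift i j A) E = card {F\<in>A. E \<subseteq> delta i j A F}"
proof -
  have "{G\<in>shift i j A. E \<subseteq> G} = delta i j A ` {F\<in>A. E \<subseteq> delta i j A F}"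
    unfolding shift_def by auto
  moreover have "inj_on (delta i j A) {F\<in>A. E \<subseteq> delta i j A F}"
    using delta_inj[OF assms] by (rule inj_on_subset) auto
  ultimately show ?thesis unfolding deg_def by (simp add: card_image)
qed

lemma deg_ge:
  assumes "i \<noteq> j" "finite A" "\<not> (j \<in> E \<and> i \<notin> E)"
  shows "deg A E \<le> deg (shift i j A) E"
  unfolding deg_shift[OF assms(1)] unfolding deg_def
  by (rule card_mono) (use assms in \<open>auto simp: delta_def\<close>)

lemma deg_X1:
  assumes "i \<noteq> j" "finite A" "j \<in> E" "i \<notin> E"
  shows "deg (shift i j A) E \<le> deg A E"
  unfolding deg_shift[OF assms(1)] unfolding deg_def
  by (rule card_mono) (use assms in \<open>auto simp: delta_def split: if_splits\<close>)

lemma deg_X2: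
  assumes "i \<noteq> j" "finite A" "j \<in> E" "i \<notin> E"
  shows "deg (shift i j A) E \<le> deg A (insert i (E - {j}))"
  unfolding deg_shift[OF assms(1)] unfolding deg_def
proof (rule card_inj_on_le)
  let ?h = "\<lambda>F. if i \<in> F then F else insert i (F - {j})"
  let ?S = "{F \<in> A. E \<subseteq> delta i j A F}"
  have S: "F \<in> A \<and> delta i j A F = F \<and> j \<in> F \<and> E \<subseteq> F \<and> (i \<notin> F \<longrightarrow> insert i (F - {j}) \<in> A)" if "F \<in> ?S" for F
    using that assms by (auto simp: delta_def split: if_splits)
  show "inj_on ?h ?S"
  proof (rule inj_onI)
    fix F1 F2 assume a: "F1 \<in> ?S" "F2 \<in> ?S" "?h F1 = ?h F2"
    from S[OF a(1)] S[OF a(2)] a(3) assms(1) show "F1 = F2"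
      by (auto split: if_splits)
  qed
  show "?h ` ?S \<subseteq> {F \<in> A. insert i (E - {j}) \<subseteq> F}"
    using S assms by auto
  show "finite {F \<in> A. insert i (E - {j}) \<subseteq> F}" using assms by auto
qed

lemma deg_sum:
  assumes "i \<noteq> j" "finite A" "j \<in> E" "i \<notin> E"
  shows "deg (shift i j A) E + deg (shift i j A) (insert i (E - {j})) = deg A E + deg A (insert i (E - {j}))"
proof -
  let ?E' = "insert i (E - {j})"
  have c: "card {F\<in>A. P F} = (\<Sum>F\<in>A. of_bool (P F))" for P
    using assms(2) by (simp add: Int_def conj_commute)
  have "(\<Sum>F\<in>A. of_bool (E \<subseteq> delta i j A F) + of_bool (?E' \<subseteq> delta i j A F))
      = (\<Sum>F\<in>A. of_bool (E \<subseteq> F) + (of_bool (?E' \<subseteq> F) :: nat))"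
    by (rule sum.cong) (use assms in \<open>auto simp: delta_def\<close>)
  thus ?thesis unfolding deg_shift[OF assms(1)] unfolding deg_def c sum.distrib by simp
qed

lemma sq_ineq:
  fixes x y x' y' :: nat
  assumes "x' \<le> x" "x' \<le> y" "x' + y' = x + y"
  shows "x^2 + y^2 \<le> x'^2 + y'^2"
proof -
  obtain a where a: "x = x' + a" using assms(1) le_Suc_ex by blast
  obtain b where b: "y = x' + b" using assms(2) le_Suc_ex by blast
  note ab = a b
  hence "y' = x' + a + b" using assms by simp
  thus ?thesis using ab by (simp add: power2_eq_square algebra_simps)
qed

lemma pair_sum:
  fixes f g :: "'a \<Rightarrow> nat"
  assumes "finite K" "X \<subseteq> K" "inj_on s X" "s ` X \<subseteq> K" "s ` X \<inter> X = {}"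
    and "\<And>E. E \<in> K \<Longrightarrow> E \<notin> X \<Longrightarrow> f E \<le> g E"
    and "\<And>E. E \<in> X \<Longrightarrow> f E + f (s E) \<le> g E + g (s E)"
  shows "sum f K \<le> sum g K"
proof -
  let ?R = "K - X - s ` X"
  have K: "K = X \<union> s ` X \<union> ?R" using assms(2,4) by blast
  have fin: "finite X" "finite (s ` X)" "finite ?R" using assms(1,2,4) finite_subset by auto
  have d: "(X \<union> s ` X) \<inter> ?R = {}" by blast
  have split: "sum h K = (\<Sum>E\<in>X. h E + h (s E)) + sum h ?R" for h :: "'a \<Rightarrow> nat"
  proof -
    have "sum h K = sum h (X \<union> s ` X) + sum h ?R"
      by (subst K, rule sum.union_disjoint) (use fin d in auto)
    also have "sum h (X \<union> s ` X) = sum h X + sum h (s ` X)"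
      by (rule sum.union_disjoint) (use fin assms(5) in auto)
    also have "sum h (s ` X) = sum (h \<circ> s) X" by (rule sum.reindex[OF assms(3)])
    finally show ?thesis by (simp add: sum.distrib)
  qed
  have "(\<Sum>E\<in>X. f E + f (s E)) \<le> (\<Sum>E\<in>X. g E + g (s E))"
    by (rule sum_mono) (rule assms(7))
  moreover have "sum f ?R \<le> sum g ?R" by (rule sum_mono) (use assms(6) in auto)
  ultimately show ?thesis unfolding split[of f] split[of g] by simp
qed

lemma ksets_swap:
  assumes "E \<in> ksets n m" "j \<in> E" "i \<notin> E" "1 \<le> i" "i \<le> n"
  shows "insert i (E - {j}) \<in> ksets n m"
proof -
  have "finite E" using assms(1) ksets_fin_mem by blast
  hence "card (insert i (E - {j})) = card E" using assms(2,3)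
  proof -
    have "card E > 0" using \<open>finite E\<close> assms(2) card_gt_0_iff by blast
    moreover have "card (insert i (E - {j})) = Suc (card (E - {j}))"
      using \<open>finite E\<close> assms(3) by (simp add: card_insert_disjoint)
    moreover have "card (E - {j}) = card E - 1" using assms(2) by (simp add: card_Diff_singleton)
    ultimately show ?thesis by simp
  qed
  thus ?thesis using assms unfolding ksets_def by auto
qed

lemma co2_shift:
  assumes A: "A \<subseteq> ksets n k" and ij: "1 \<le> i" "i < j" "j \<le> n"
  shows "co2 n k A \<le> co2 n k (shift i j A)"
proof -
  let ?K = "ksets n (k - 1)"
  let ?X = "{E \<in> ?K. j \<in> E \<and> i \<notin> E}"
  let ?s = "\<lambda>E. insert i (E - {j})"
  have ne: "i \<noteq> j" using ij by simp
  have finA: "finite A" using A ksets_finite finite_subset by blast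
  show ?thesis unfolding co2_def
  proof (rule pair_sum)
    show "finite ?K" by (rule ksets_finite)
    show "?X \<subseteq> ?K" by blast
    show "inj_on ?s ?X"
    proof (rule inj_onI)
      fix x y assume "x \<in> ?X" "y \<in> ?X" "?s x = ?s y"
      hence hx: "j \<in> x" "i \<notin> x" "j \<in> y" "i \<notin> y" by auto
      have "x = insert j (?s x - {i})" "y = insert j (?s y - {i})"
        using swap_back[OF hx(1,2) ne] swap_back[OF hx(3,4) ne] by argo+
      thus "x = y" using \<open>?s x = ?s y\<close> by simp
    qed
    show "?s ` ?X \<subseteq> ?K" using ksets_swap ij by auto
    show "?s ` ?X \<inter> ?X = {}" by auto
    show "(deg A E)^2 \<le> (deg (shift i j A) E)^2" if "E \<in> ?K" "E \<notin> ?X" for E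
      using deg_ge[OF ne finA, of E] that by (simp add: power_mono)
    show "(deg A E)^2 + (deg A (?s E))^2 \<le> (deg (shift i j A) E)^2 + (deg (shift i j A) (?s E))^2"
      if "E \<in> ?X" for E
      using that deg_X1[OF ne finA] deg_X2[OF ne finA] deg_sum[OF ne finA]
      by (intro sq_ineq) auto
  qed
qed

lemma card_swap:
  assumes "finite S" "j \<in> S" "i \<notin> S"
  shows "card (insert i (S - {j})) = card S"
proof -
  have "card S > 0" using assms card_gt_0_iff by blast
  moreover have "card (insert i (S - {j})) = Suc (card (S - {j}))"
    using assms by (simp add: card_insert_disjoint)
  moreover have "card (S - {j}) = card S - 1" using assms(2) by (simp add: card_Diff_singleton)
  ultimately show ?thesis by simp
qed

lemma shift_ksets:
  assumes "A \<subseteq> ksets n k" "1 \<le> i" "i \<le> n"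
  shows "shift i j A \<subseteq> ksets n k"
  using assms ksets_swap unfolding shift_def delta_def by auto

lemma key_mixed:
  assumes T: "t_intersecting t A" and fin: "\<And>F. F \<in> A \<Longrightarrow> finite F" and ne: "i \<noteq> j"
    and F1: "F1 \<in> A" "j \<in> F1" "i \<notin> F1"
    and F2: "F2 \<in> A" "j \<in> F2 \<and> i \<notin> F2 \<longrightarrow> insert i (F2 - {j}) \<in> A"
  shows "t \<le> card (insert i (F1 - {j}) \<inter> F2)"
proof -
  have t12: "t \<le> card (F1 \<inter> F2)" using T F1 F2 unfolding t_intersecting_def by blast
  have finI: "finite (F1 \<inter> F2)" using fin F1 by blast
  show ?thesis
  proof (cases "i \<in> F2")
    case True
    show ?thesis
    proof (cases "j \<in> F2")
      case True
      have "insert i (F1 - {j}) \<inter> F2 = insert i ((F1 \<inter> F2) - {j})" using \<open>i \<in> F2\<close> by auto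
      moreover have "card (insert i ((F1 \<inter> F2) - {j})) = card (F1 \<inter> F2)"
        by (rule card_swap[OF finI]) (use True F1 in auto)
      ultimately show ?thesis using t12 by simp
    next
      case False
      have "F1 \<inter> F2 \<subseteq> insert i (F1 - {j}) \<inter> F2" using False by auto
      moreover have "finite (insert i (F1 - {j}) \<inter> F2)" using fin F2 by blast
      ultimately show ?thesis using t12 card_mono le_trans by blast
    qed
  next
    case False
    show ?thesis
    proof (cases "j \<in> F2")
      case True
      let ?F2 = "insert i (F2 - {j})"
      have "?F2 \<in> A" using F2 True False by blast
      hence "t \<le> card (F1 \<inter> ?F2)" using T F1 unfolding t_intersecting_def by blast
      moreover have "F1 \<inter> ?F2 = insert i (F1 - {j}) \<inter> F2" using False F1 by auto
      ultimately show ?thesis by simp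
    next
      case False2: False
      have "F1 \<inter> F2 = insert i (F1 - {j}) \<inter> F2" using False False2 by auto
      thus ?thesis using t12 by simp
    qed
  qed
qed

lemma shift_tint:
  assumes T: "t_intersecting t A" and fin: "\<And>F. F \<in> A \<Longrightarrow> finite F" and ne: "i \<noteq> j"
  shows "t_intersecting t (shift i j A)"
  unfolding t_intersecting_def
proof (intro ballI)
  fix G1 G2 assume "G1 \<in> shift i j A" "G2 \<in> shift i j A"
  then obtain F1 F2 where F: "F1 \<in> A" "F2 \<in> A" "G1 = delta i j A F1" "G2 = delta i j A F2"
    unfolding shift_def by blast
  let ?P = "\<lambda>F. j \<in> F \<and> i \<notin> F \<and> insert i (F - {j}) \<notin> A"
  show "t \<le> card (G1 \<inter> G2)"
  proof (cases "?P F1")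
    case P1: True
    hence G1: "G1 = insert i (F1 - {j})" using F by (simp add: delta_def)
    show ?thesis
    proof (cases "?P F2")
      case True
      hence G2: "G2 = insert i (F2 - {j})" using F by (simp add: delta_def)
      have "G1 \<inter> G2 = insert i ((F1 \<inter> F2) - {j})" using G1 G2 by auto
      moreover have "card (insert i ((F1 \<inter> F2) - {j})) = card (F1 \<inter> F2)"
        by (rule card_swap) (use fin F P1 True in auto)
      moreover have "t \<le> card (F1 \<inter> F2)" using T F unfolding t_intersecting_def by blast
      ultimately show ?thesis by simp
    next
      case False
      hence G2: "G2 = F2" using F unfolding delta_def by (simp only: if_False)
      show ?thesis unfolding G1 G2
        by (rule key_mixed[OF T fin ne]) (use F P1 False in auto)
    qed
  next
    case P1: False
    hence G1: "G1 = F1" using F unfolding delta_def by (simp only: if_False)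
    show ?thesis
    proof (cases "?P F2")
      case True
      hence G2: "G2 = insert i (F2 - {j})" using F by (simp add: delta_def)
      have "t \<le> card (G2 \<inter> G1)" unfolding G1 G2
        by (rule key_mixed[OF T fin ne]) (use F P1 True in auto)
      thus ?thesis by (simp add: Int_commute)
    next
      case False
      hence G2: "G2 = F2" using F unfolding delta_def by (simp only: if_False)
      show ?thesis using T F unfolding G1 G2 t_intersecting_def by blast
    qed
  qed
qed

definition wt :: "nat set set \<Rightarrow> nat" where
  "wt B = (\<Sum>F\<in>B. \<Sum>F)"

lemma wt_shift:
  assumes A: "A \<subseteq> ksets n k" and ij: "i < j" and neq: "shift i j A \<noteq> A"
  shows "wt (shift i j A) < wt A"
proof -
  have ne: "i \<noteq> j" using ij by simp
  have finA: "finite A" using A ksets_finite finite_subset by blast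
  have fin: "finite F" if "F \<in> A" for F using that A ksets_fin_mem by blast
  let ?P = "\<lambda>F. j \<in> F \<and> i \<notin> F \<and> insert i (F - {j}) \<notin> A"
  have wt1: "wt (shift i j A) = (\<Sum>F\<in>A. \<Sum>(delta i j A F))"
    unfolding wt_def shift_def by (simp add: sum.reindex[OF delta_inj[OF ne]])
  have lt: "\<Sum>(delta i j A F) < \<Sum>F" if "F \<in> A" "?P F" for F
  proof -
    have "delta i j A F = insert i (F - {j})" using that by (simp add: delta_def)
    moreover have "\<Sum>(insert i (F - {j})) = i + \<Sum>(F - {j})" using that fin by simp
    moreover have "\<Sum>F = j + \<Sum>(F - {j})" using that fin sum.remove by metis
    ultimately show ?thesis using ij by simp
  qed
  have le: "\<Sum>(delta i j A F) \<le> \<Sum>F" if "F \<in> A" for F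
  proof (cases "?P F")
    case True thus ?thesis using lt[OF that] by simp
  next
    case False thus ?thesis unfolding delta_def by (simp only: if_False)
  qed
  have "\<exists>F\<in>A. ?P F"
  proof (rule ccontr)
    assume "\<not> (\<exists>F\<in>A. ?P F)"
    hence "\<forall>F\<in>A. delta i j A F = F" unfolding delta_def by auto
    hence "shift i j A = A" unfolding shift_def by simp
    with neq show False by simp
  qed
  hence "(\<Sum>F\<in>A. \<Sum>(delta i j A F)) < (\<Sum>F\<in>A. \<Sum>F)"
    using lt le finA by (intro sum_strict_mono_ex1) auto
  thus ?thesis by (simp only: wt1 wt_def[of A])
qed

lemma exists_compressed:
  "A \<subseteq> ksets n k \<Longrightarrow> t_intersecting t A \<Longrightarrow>
   \<exists>B. B \<subseteq> ksets n k \<and> left_compressed n B \<and> t_intersecting t B \<and> co2 n k B \<ge> co2 n k A"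
proof (induction "wt A" arbitrary: A rule: less_induct)
  case less
  show ?case
  proof (cases "left_compressed n A")
    case True thus ?thesis using less.prems by blast
  next
    case False
    then obtain i j where ij: "1 \<le> i" "i < j" "j \<le> n" "shift i j A \<noteq> A"
      unfolding left_compressed_def by blast
    let ?S = "shift i j A"
    have S1: "?S \<subseteq> ksets n k" using shift_ksets less.prems ij by simp
    have S2: "t_intersecting t ?S"
      using shift_tint[OF less.prems(2)] less.prems(1) ksets_fin_mem ij by fastforce
    have S3: "co2 n k A \<le> co2 n k ?S" using co2_shift less.prems(1) ij by blast
    have "wt ?S < wt A" using wt_shift less.prems(1) ij by blast
    from less.hyps[OF this S1 S2] S3 show ?thesis using le_trans by blast
  qed
qed

theorem corollary2p3:
  fixes n k t :: nat and \<A> :: "nat set set"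
  assumes "\<A> \<subseteq> ksets n k"
    and "t_intersecting t \<A>"
  shows "(\<forall>i j. 1 \<le> i \<and> i < j \<and> j \<le> n \<longrightarrow> co2 n k (shift i j \<A>) \<ge> co2 n k \<A>)
       \<and> (\<exists>\<B>. \<B> \<subseteq> ksets n k \<and> left_compressed n \<B> \<and> t_intersecting t \<B>
              \<and> co2 n k \<B> \<ge> co2 n k \<A>)"
  using co2_shift[OF assms(1)] exists_compressed[OF assms] by blast

end
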